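(* If $C$ is a sorting network on $n$ channels with depth $d$, then there is a co-saturated sorting network $N$ on $n$ channels with depth $d$.
   Context: Channels are numbered $1,\ldots,n$. A comparator network on $n$ channels of depth $d$ is a sequence $C=L_1;\ldots;L_d$ of layers; each layer is a set of comparators $(i,j)$ with $1\le i<j\le n$, and each channel occurs in at most one comparator of a given layer. An input $\bar x\in\{0,1\}^n$ propagates as follows: $\bar x_0=\bar x$, and $\bar x_k$ is obtained from $\bar x_{k-1}$ by, for each $(i,j)\in L_k$, putting the minimum of the values at positions $i,j$ at position $i$ and the maximum at position $j$. The output is $C(\bar x)=\bar x_d$, and $C$ is a sorting network if $C(\bar x)$ is sorted in non-decreasing order for every $\bar x\in\{0,1\}^n$. A channel is used in layer $L_\ell$ if it occurs in a comparator of $L_\ell$. The last layer $L_d$ is in last layer normal form (llnf) if every comparator in $L_d$ is of the form $(i,i+1)$ and there is no $i<n$ with both $i$ and $i+1$ unused in $L_d$. The blocks (or $(d-1)$-blocks) of $C$ are the vertex sets of connected components of the graph on $\{1,\ldots,n\}$ with an edge $\{i,j\}$ for each comparator $(i,j)\in L_d$; when $L_d$ is in llnf, each block is either a single channel unused in $L_d$ or a pair $\{i,i+1\}$ with $(i,i+1)\in L_d$, and the blocks are ordered top to bottom as consecutive intervals. A sorting network of depth $d$ is co-saturated if: (i) its last layer is in llnf; (ii) there are no two consecutive blocks each of which contains a channel unused in layer $L_{d-1}$; and (iii) whenever $(i,i+1)\in L_d$ and channels $i$ and $i+1$ are both unused in $L_{d-1}$, the channels $i-1$ and $i+2$ (whenever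 they exist, i.e. lie in $\{1,\ldots,n\}$) are used in $L_d$. *)

theory Defs
  imports Main
begin

type_synonym layer = "(nat \<times> nat) set"
type_synonym network = "layer list"

definition is_layer :: "nat \<Rightarrow> layer \<Rightarrow> bool" where
  "is_layer n L \<longleftrightarrow>
     (\<forall>(i,j)\<in>L. 1 \<le> i \<and> i < j \<and> j \<le> n) \<and>
     (\<forall>c1\<in>L. \<forall>c2\<in>L. c1 \<noteq> c2 \<longrightarrow> {fst c1, snd c1} \<inter> {fst c2, snd c2} = {})"

definition is_network :: "nat \<Rightarrow> network \<Rightarrow> bool" where
  "is_network n C \<longleftrightarrow> (\<forall>L\<in>set C. is_layer n L)"

definition used :: "layer \<Rightarrow> nat \<Rightarrow> bool" where
  "used L c \<longleftrightarrow> (\<exists>(i,j)\<in>L. c = i \<or> c = j)"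

text \<open>One layer applied to a 0/1 input (False = 0, True = 1).\<close>
definition apply_layer :: "layer \<Rightarrow> (nat \<Rightarrow> bool) \<Rightarrow> (nat \<Rightarrow> bool)" where
  "apply_layer L x = (\<lambda>k.
     if (\<exists>j. (k,j) \<in> L) then min (x k) (x (THE j. (k,j) \<in> L))
     else if (\<exists>i. (i,k) \<in> L) then max (x (THE i. (i,k) \<in> L)) (x k)
     else x k)"

definition run :: "network \<Rightarrow> (nat \<Rightarrow> bool) \<Rightarrow> (nat \<Rightarrow> bool)" where
  "run C x = fold apply_layer C x"

definition sorted_on :: "nat \<Rightarrow> (nat \<Rightarrow> bool) \<Rightarrow> bool" where
  "sorted_on n y \<longleftrightarrow> (\<forall>i j. 1 \<le> i \<longrightarrow> i \<le> j \<longrightarrow> j \<le> n \<longrightarrow> y i \<le> y j)"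

text \<open>Sorting network: sorts every 0/1 input on channels 1..n (values outside 1..n are
  irrelevant since comparators only touch channels 1..n).\<close>
definition sorting_network :: "nat \<Rightarrow> network \<Rightarrow> bool" where
  "sorting_network n C \<longleftrightarrow> is_network n C \<and> (\<forall>x. sorted_on n (run C x))"

definition last_layer :: "network \<Rightarrow> layer" where
  "last_layer C = (if C = [] then {} else last C)"

definition prev_layer :: "network \<Rightarrow> layer" where
  "prev_layer C = (if length C < 2 then {} else C ! (length C - 2))"

definition llnf :: "nat \<Rightarrow> layer \<Rightarrow> bool" where
  "llnf n L \<longleftrightarrow> (\<forall>(i,j)\<in>L. j = i + 1) \<and>
     \<not> (\<exists>i. 1 \<le> i \<and> i < n \<and> \<not> used L i \<and> \<not> used L (i+1))"

text \<open>Blocks of a layer (connected components of the comparator graph on 1..n).\<close>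
definition block_of :: "layer \<Rightarrow> nat \<Rightarrow> nat set" where
  "block_of L c = {c} \<union> {j. (c,j) \<in> L} \<union> {i. (i,c) \<in> L}"

definition blocks :: "nat \<Rightarrow> layer \<Rightarrow> nat set set" where
  "blocks n L = block_of L ` {1..n}"

definition co_saturated :: "nat \<Rightarrow> network \<Rightarrow> bool" where
  "co_saturated n C \<longleftrightarrow>
     sorting_network n C \<and>
     llnf n (last_layer C) \<and>
     (\<forall>B\<in>blocks n (last_layer C). \<forall>B'\<in>blocks n (last_layer C).
        Max B + 1 = Min B' \<longrightarrow>
        \<not> ((\<exists>c\<in>B. \<not> used (prev_layer C) c) \<and> (\<exists>c\<in>B'. \<not> used (prev_layer C) c))) \<and>
     (\<forall>i. (i, i+1) \<in> last_layer C \<and> \<not> used (prev_layer C) i \<and> \<not> used (prev_layer C) (i+1)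
        \<longrightarrow> (2 \<le> i \<longrightarrow> used (last_layer C) (i - 1)) \<and>
            (i + 2 \<le> n \<longrightarrow> used (last_layer C) (i + 2)))"

end

theory Submission
  imports Defs
begin

lemma layer_bounds: "is_layer n L \<Longrightarrow> (i,j)\<in>L \<Longrightarrow> 1 \<le> i \<and> i < j \<and> j \<le> n"
  unfolding is_layer_def by blast

lemma layer_disj: "is_layer n L \<Longrightarrow> (a,b)\<in>L \<Longrightarrow> (c,d)\<in>L \<Longrightarrow> (a,b) \<noteq> (c,d) \<Longrightarrow> {a,b} \<inter> {c,d} = {}"
  unfolding is_layer_def by (metis fst_conv snd_conv)

lemma U1: "is_layer n L \<Longrightarrow> (i,j)\<in>L \<Longrightarrow> (i,j')\<in>L \<Longrightarrow> j = j'"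
  using layer_disj by blast
lemma U2: "is_layer n L \<Longrightarrow> (i,j)\<in>L \<Longrightarrow> (i',j)\<in>L \<Longrightarrow> i = i'"
  using layer_disj by blast
lemma U3: "is_layer n L \<Longrightarrow> (i,j)\<in>L \<Longrightarrow> (j,k)\<in>L \<Longrightarrow> False"
proof -
  assume a: "is_layer n L" "(i,j)\<in>L" "(j,k)\<in>L"
  have "i < j" "j < k" using a layer_bounds by blast+
  hence "(i,j) \<noteq> (j,k)" by auto
  thus False using layer_disj[OF a] by blast
qed

lemma AL1: "is_layer n L \<Longrightarrow> (i,j)\<in>L \<Longrightarrow> apply_layer L x i = (x i \<and> x j)"
proof -
  assume a: "is_layer n L" "(i,j)\<in>L"
  have "(THE j. (i,j)\<in>L) = j" using a by (auto intro!: the_equality dest: U1)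
  thus ?thesis using a unfolding apply_layer_def by (auto simp: min_def)
qed

lemma AL2: "is_layer n L \<Longrightarrow> (i,j)\<in>L \<Longrightarrow> apply_layer L x j = (x i \<or> x j)"
proof -
  assume a: "is_layer n L" "(i,j)\<in>L"
  have "(THE i. (i,j)\<in>L) = i" using a by (auto intro!: the_equality dest: U2)
  moreover have "\<not> (\<exists>k. (j,k)\<in>L)" using a U3 by blast
  ultimately show ?thesis using a unfolding apply_layer_def by (auto simp: max_def)
qed

lemma AL3: "\<not> used L k \<Longrightarrow> apply_layer L x k = x k"
  unfolding apply_layer_def used_def by auto

lemma layer_sub: "is_layer n L \<Longrightarrow> L0 \<subseteq> L \<Longrightarrow> is_layer n L0"
  unfolding is_layer_def by blast

lemma apply_mono: "(\<And>k. x k \<le> y k) \<Longrightarrow> apply_layer L x k \<le> apply_layer L y k"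
  unfolding apply_layer_def by (auto simp: min_def max_def le_bool_def)

lemma run_mono: "(\<And>k. x k \<le> y k) \<Longrightarrow> run C x k \<le> run C y k"
proof (induction C arbitrary: x y k)
  case Nil thus ?case by (simp add: run_def)
next
  case (Cons L C)
  have "run (L#C) x = run C (apply_layer L x)" "run (L#C) y = run C (apply_layer L y)"
    by (simp_all add: run_def)
  thus ?case using Cons apply_mono by metis
qed

lemma used_cases: "used L k \<longleftrightarrow> (\<exists>j. (k,j)\<in>L) \<or> (\<exists>i. (i,k)\<in>L)"
  unfolding used_def by auto

lemma same1: "is_layer n L \<Longrightarrow> (k,j)\<in>L \<Longrightarrow> (a,b)\<in>L \<Longrightarrow> k = a \<or> k = b \<Longrightarrow> a = k \<and> b = j"
  using layer_disj[of n L k j a b] by blast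
lemma same2: "is_layer n L \<Longrightarrow> (j,k)\<in>L \<Longrightarrow> (a,b)\<in>L \<Longrightarrow> k = a \<or> k = b \<Longrightarrow> a = j \<and> b = k"
  using layer_disj[of n L j k a b] by blast

lemma active_eq:
  assumes "is_layer n L"
  shows "apply_layer L y = apply_layer {c\<in>L. y (fst c) \<and> \<not> y (snd c)} y"
proof
  fix k
  let ?A = "{c\<in>L. y (fst c) \<and> \<not> y (snd c)}"
  have lA: "is_layer n ?A" by (rule layer_sub[OF assms]) auto
  show "apply_layer L y k = apply_layer ?A y k"
  proof (cases "used L k")
    case False
    hence "\<not> used ?A k" unfolding used_def by auto
    thus ?thesis using False AL3 by metis
  next
    case True
    then obtain j where "(k,j)\<in>L \<or> (j,k)\<in>L" unfolding used_cases by blast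
    thus ?thesis
    proof
      assume h: "(k,j)\<in>L"
      show ?thesis
      proof (cases "y k \<and> \<not> y j")
        case True
        hence "(k,j)\<in>?A" using h by auto
        thus ?thesis using AL1[OF assms h] AL1[OF lA] by auto
      next
        case False
        have "\<not> used ?A k"
        proof
          assume "used ?A k"
          then obtain a b where ab: "(a,b)\<in>?A" "k = a \<or> k = b" unfolding used_def by auto
          have "(a,b)\<in>L" using ab by auto
          hence "a = k \<and> b = j" using same1[OF assms h _ ab(2)] by blast
          thus False using ab(1) False by auto
        qed
        thus ?thesis using AL1[OF assms h] AL3 False by auto
      qed
    next
      assume h: "(j,k)\<in>L"
      show ?thesis
      proof (cases "y j \<and> \<not> y k")
        case True
        hence "(j,k)\<in>?A" using h by auto
        thus ?thesis using AL2[OF assms h] AL2[OF lA] by auto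
      next
        case False
        have "\<not> used ?A k"
        proof
          assume "used ?A k"
          then obtain a b where ab: "(a,b)\<in>?A" "k = a \<or> k = b" unfolding used_def by auto
          have "(a,b)\<in>L" using ab by auto
          hence "a = j \<and> b = k" using same2[OF assms h _ ab(2)] by blast
          thus False using ab(1) False by auto
        qed
        thus ?thesis using AL2[OF assms h] AL3 False by auto
      qed
    qed
  qed
qed

definition cnt :: "nat \<Rightarrow> (nat \<Rightarrow> bool) \<Rightarrow> nat" where
  "cnt n v = card {k\<in>{1..n}. v k}"

lemma layer_finite: "is_layer n L \<Longrightarrow> L \<subseteq> {1..n} \<times> {1..n}"
  using layer_bounds by fastforce

lemma val_char:
  fixes v :: "nat \<Rightarrow> bool"
  assumes L: "is_layer n L"
  defines "A \<equiv> {c\<in>L. v (fst c) \<and> \<not> v (snd c)}"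
  shows "apply_layer L v k = (if k \<in> fst`A then False else if k \<in> snd`A then True else v k)"
proof -
  have lA: "is_layer n A" unfolding A_def by (rule layer_sub[OF L]) auto
  have e: "apply_layer L v = apply_layer A v" using active_eq[OF L] unfolding A_def by simp
  show ?thesis
  proof (cases "k \<in> fst`A")
    case True
    then obtain j where h: "(k,j)\<in>A" by force
    thus ?thesis using AL1[OF lA h, of v] e True unfolding A_def by auto
  next
    case F1: False
    show ?thesis
    proof (cases "k \<in> snd`A")
      case True
      then obtain i where h: "(i,k)\<in>A" by force
      thus ?thesis using AL2[OF lA h, of v] e True F1 unfolding A_def by auto
    next
      case False
      hence "\<not> used A k" using F1 unfolding used_def by force
      thus ?thesis using AL3 e F1 False by metis
    qed
  qed
qed

lemma cnt_layer:
  assumes L: "is_layer n L"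
  shows "cnt n (apply_layer L v) = cnt n v"
proof -
  define A where "A = {c\<in>L. v (fst c) \<and> \<not> v (snd c)}"
  define Z where "Z = {k\<in>{1..n}. v k}"
  have AL: "A \<subseteq> L" unfolding A_def by auto
  have "finite L" by (rule finite_subset[OF layer_finite[OF L]]) simp
  hence finA: "finite A" using AL finite_subset by blast
  have fZ: "finite Z" unfolding Z_def by auto
  have s1: "fst`A \<subseteq> Z" unfolding A_def Z_def by (auto dest: layer_bounds[OF L])
  have s2: "snd`A \<inter> Z = {}" unfolding A_def Z_def by auto
  have s3: "snd`A \<subseteq> {1..n}" unfolding A_def by (auto dest: layer_bounds[OF L])
  have eq: "{k\<in>{1..n}. apply_layer L v k} = (Z - fst`A) \<union> snd`A"
  proof (rule set_eqI)
    fix k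
    have vc: "apply_layer L v k = (if k \<in> fst`A then False else if k \<in> snd`A then True else v k)"
      using val_char[OF L, of v k] unfolding A_def by simp
    show "k \<in> {k\<in>{1..n}. apply_layer L v k} \<longleftrightarrow> k \<in> (Z - fst`A) \<union> snd`A"
    proof -
      have "k \<in> {k\<in>{1..n}. apply_layer L v k} \<longleftrightarrow> k \<in> {1..n} \<and> apply_layer L v k" by simp
      moreover have "k \<in> fst`A \<Longrightarrow> k \<notin> snd`A" using s1 s2 by blast
      moreover have "k \<in> snd`A \<Longrightarrow> k \<in> {1..n}" using s3 by blast
      moreover have "k \<in> fst`A \<Longrightarrow> k \<in> {1..n}" using s1 unfolding Z_def by blast
      ultimately show ?thesis using vc unfolding Z_def by (cases "k \<in> fst`A"; cases "k \<in> snd`A") simp_all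
    qed
  qed
  have i1: "inj_on fst A"
  proof (rule inj_onI)
    fix x y assume "x\<in>A" "y\<in>A" "fst x = fst y"
    thus "x = y" using AL U1[OF L, of "fst x" "snd x" "snd y"] by (cases x, cases y) auto
  qed
  have i2: "inj_on snd A"
  proof (rule inj_onI)
    fix x y assume "x\<in>A" "y\<in>A" "snd x = snd y"
    thus "x = y" using AL U2[OF L, of "fst x" "snd x" "fst y"] by (cases x, cases y) auto
  qed
  have cA1: "card (fst`A) = card A" using i1 by (simp add: card_image)
  have cA2: "card (snd`A) = card A" using i2 by (simp add: card_image)
  have le: "card A \<le> card Z" using card_mono[OF fZ s1] cA1 by simp
  have "card ((Z - fst`A) \<union> snd`A) = card (Z - fst`A) + card (snd`A)"
    by (rule card_Un_disjoint) (use fZ finA s2 in auto)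
  also have "card (Z - fst`A) = card Z - card (fst`A)" using s1 fZ by (simp add: card_Diff_subset finite_subset)
  finally have "card ((Z - fst`A) \<union> snd`A) = card Z" using cA1 cA2 le by simp
  thus ?thesis unfolding cnt_def eq Z_def by simp
qed

lemma run_Cons: "run (L#C) x = run C (apply_layer L x)" by (simp add: run_def)
lemma run_Nil: "run [] x = x" by (simp add: run_def)
lemma run_append: "run (A @ B) x = run B (run A x)" by (simp add: run_def)

lemma cnt_run: "is_network n C \<Longrightarrow> cnt n (run C x) = cnt n x"
proof (induction C arbitrary: x)
  case Nil thus ?case by (simp add: run_Nil)
next
  case (Cons L C)
  hence "is_layer n L" "is_network n C" unfolding is_network_def by auto
  thus ?case using Cons cnt_layer by (simp add: run_Cons)
qed

lemma sorted_fixed: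
  assumes L: "is_layer n L" and s: "sorted_on n s"
  shows "apply_layer L s = s"
proof -
  have E: "{c\<in>L. s (fst c) \<and> \<not> s (snd c)} = {}"
  proof -
    { fix i j assume h: "(i,j)\<in>L"
      have b: "1 \<le> i" "i \<le> j" "j \<le> n" using layer_bounds[OF L h] by auto
      have "s i \<le> s j" using s b unfolding sorted_on_def by blast
      hence "\<not> (s i \<and> \<not> s j)" by (simp add: le_bool_def) }
    thus ?thesis by auto
  qed
  have "apply_layer L s = apply_layer {} s" using active_eq[OF L, of s] unfolding E .
  thus ?thesis by (auto simp: AL3 used_def)
qed

lemma run_fixed: "is_network n C \<Longrightarrow> sorted_on n s \<Longrightarrow> run C s = s"
proof (induction C)
  case Nil thus ?case by (simp add: run_Nil)
next
  case (Cons L C)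
  hence "is_layer n L" "is_network n C" unfolding is_network_def by auto
  thus ?case using Cons sorted_fixed by (simp add: run_Cons)
qed

lemma sortedD: "sorted_on n z \<Longrightarrow> 1 \<le> i \<Longrightarrow> i \<le> j \<Longrightarrow> j \<le> n \<Longrightarrow> z i \<le> z j"
  unfolding sorted_on_def by blast

lemma thr:
  assumes s: "sorted_on n z" and k: "1 \<le> k" "k \<le> n"
  shows "z k = (n - cnt n z < k)"
proof (cases "z k")
  case True
  have "{k..n} \<subseteq> {m\<in>{1..n}. z m}"
  proof
    fix m assume m: "m \<in> {k..n}"
    have "z k \<le> z m" using m k by (intro sortedD[OF s]) auto
    thus "m \<in> {m\<in>{1..n}. z m}" using True m k by (simp add: le_bool_def)
  qed
  hence "card {k..n} \<le> cnt n z" unfolding cnt_def by (intro card_mono) auto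
  hence "n + 1 - k \<le> cnt n z" by simp
  thus ?thesis using True k by linarith
next
  case False
  have "{m\<in>{1..n}. z m} \<subseteq> {k+1..n}"
  proof
    fix m assume m: "m \<in> {m\<in>{1..n}. z m}"
    have "\<not> m \<le> k"
    proof
      assume "m \<le> k"
      hence "z m \<le> z k" using m k by (intro sortedD[OF s]) auto
      thus False using m False by (simp add: le_bool_def)
    qed
    thus "m \<in> {k+1..n}" using m by simp
  qed
  hence "cnt n z \<le> card {k+1..n}" unfolding cnt_def by (intro card_mono) auto
  hence "cnt n z \<le> n - k" by simp
  thus ?thesis using False k by linarith
qed

lemma cnt_le: "cnt n x \<le> n"
proof -
  have "cnt n x \<le> card {1..n}" unfolding cnt_def by (intro card_mono) auto
  thus ?thesis by simp
qed

lemma cnt_upd_F: "k \<in> {1..n} \<Longrightarrow> x k \<Longrightarrow> cnt n (x(k:=False)) + 1 = cnt n x"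
proof -
  assume k: "k \<in> {1..n}" "x k"
  have e: "{m\<in>{1..n}. (x(k:=False)) m} = {m\<in>{1..n}. x m} - {k}" by auto
  have "k \<in> {m\<in>{1..n}. x m}" using k by auto
  moreover have fin: "finite {m\<in>{1..n}. x m}" by simp
  ultimately have "card {m\<in>{1..n}. x m} > 0" using card_gt_0_iff by blast
  hence "card ({m\<in>{1..n}. x m} - {k}) + 1 = card {m\<in>{1..n}. x m}"
    using card_Diff_singleton[OF \<open>k \<in> {m\<in>{1..n}. x m}\<close>] by simp
  thus ?thesis unfolding cnt_def e .
qed

lemma cnt_upd_T: "k \<in> {1..n} \<Longrightarrow> \<not> x k \<Longrightarrow> cnt n (x(k:=True)) = cnt n x + 1"
proof -
  assume k: "k \<in> {1..n}" "\<not> x k"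
  have e: "{m\<in>{1..n}. (x(k:=True)) m} = insert k {m\<in>{1..n}. x m}" using k by auto
  have "k \<notin> {m\<in>{1..n}. x m}" using k by auto
  hence "card (insert k {m\<in>{1..n}. x m}) = card {m\<in>{1..n}. x m} + 1" by simp
  thus ?thesis unfolding cnt_def e .
qed

lemma exists_diff:
  assumes c: "cnt n x = cnt n x0" and d: "k \<in> {1..n}" "x k \<noteq> x0 k"
  shows "\<exists>j\<in>{1..n}. x j \<and> \<not> x0 j"
proof (rule ccontr)
  assume "\<not> ?thesis"
  hence sub: "{m\<in>{1..n}. x m} \<subseteq> {m\<in>{1..n}. x0 m}" by auto
  have "{m\<in>{1..n}. x m} = {m\<in>{1..n}. x0 m}"
    by (rule card_subset_eq[OF _ sub]) (use c in \<open>auto simp: cnt_def\<close>)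
  thus False using d by blast
qed

lemma run_single: "run [L] y = apply_layer L y" by (simp add: run_def)

lemma johnson:
  assumes SN: "sorting_network n (Q @ [L])" and pq: "(p,q) \<in> L" and nadj: "q \<noteq> p+1"
  shows "\<not> (run Q x0 p \<and> \<not> run Q x0 q)"
proof
  assume G0: "run Q x0 p \<and> \<not> run Q x0 q"
  have netQ: "is_network n Q" and layL: "is_layer n L" and netC: "is_network n (Q @ [L])"
    using SN unfolding sorting_network_def is_network_def by auto
  have bnd: "1 \<le> p" "p + 2 \<le> q" "q \<le> n" using layer_bounds[OF layL pq] nadj by auto
  define f where "f = run Q"
  define Good where "Good v \<longleftrightarrow> f v p \<and> \<not> f v q" for v
  have G: "apply_layer L (f v) k = (n - cnt n v < k)" if "1 \<le> k" "k \<le> n" for v k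
  proof -
    have s: "sorted_on n (apply_layer L (f v))" using SN unfolding sorting_network_def f_def
      by (metis run_append run_single)
    have "cnt n (apply_layer L (f v)) = cnt n v"
      using cnt_run[OF netC, of v] unfolding f_def run_append run_single .
    thus ?thesis using thr[OF s that] by simp
  qed
  have gp: "apply_layer L y p = (y p \<and> y q)" for y using AL1[OF layL pq] .
  have gq: "apply_layer L y q = (y p \<or> y q)" for y using AL2[OF layL pq] .
  have mono: "f a k \<le> f b k" if "\<And>k. a k \<le> b k" for a b k unfolding f_def using run_mono that by blast
  have propag: "Good (x(j:=False, jb:=True))"
    if Gx: "Good x" and xj: "x j" and xjb: "\<not> x jb" and jr: "j \<in> {1..n}" "jb \<in> {1..n}" for x j jb
  proof -
    define w where "w = cnt n x"
    define lo where "lo = x(j:=False)"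
    define hi where "hi = x(jb:=True)"
    define x' where "x' = x(j:=False, jb:=True)"
    have jj: "j \<noteq> jb" using xj xjb by auto
    have c_lo: "cnt n lo + 1 = w" unfolding lo_def w_def using cnt_upd_F[of j n x, OF jr(1) xj] .
    have c_hi: "cnt n hi = w + 1" unfolding hi_def w_def using cnt_upd_T[of jb n x, OF jr(2) xjb] .
    have "cnt n hi \<le> n" by (rule cnt_le)
    hence wn: "w + 1 \<le> n" using c_hi by simp
    have c_x': "cnt n x' = w"
    proof -
      have "\<not> lo jb" unfolding lo_def using xjb jj by simp
      hence "cnt n (lo(jb:=True)) = cnt n lo + 1" using cnt_upd_T[of jb n lo, OF jr(2)] by blast
      moreover have "lo(jb:=True) = x'" unfolding lo_def x'_def by simp
      ultimately show ?thesis using c_lo by simp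
    qed
    have m1: "f lo k \<le> f x k" for k by (rule mono) (simp add: lo_def le_bool_def)
    have m2: "f lo k \<le> f x' k" for k by (rule mono) (auto simp: lo_def x'_def le_bool_def)
    have m3: "f x k \<le> f hi k" for k by (rule mono) (simp add: hi_def le_bool_def)
    have m4: "f x' k \<le> f hi k" for k by (rule mono) (auto simp: hi_def x'_def le_bool_def jj)
    have fxp: "f x p" and fxq: "\<not> f x q" using Gx unfolding Good_def by auto
    have "apply_layer L (f x) q" using gq fxp by simp
    hence t1: "n - w < q" using G[of q x] bnd unfolding w_def by simp
    have "\<not> apply_layer L (f x) p" using gp fxq by simp
    hence t2: "\<not> (n - w < p)" using G[of p x] bnd unfolding w_def by simp
    have c1: "f x' p"
    proof (rule ccontr)
      assume np: "\<not> f x' p"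
      have "\<not> f lo p" using m2[of p] np by (simp add: le_bool_def)
      moreover have "\<not> f lo q" using m1[of q] fxq by (simp add: le_bool_def)
      ultimately have "\<not> apply_layer L (f lo) q" using gq by simp
      hence "\<not> (n - cnt n lo < q)" using G[of q lo] bnd by simp
      hence qq: "q \<le> n - cnt n lo" by simp
      have hp: "f hi p" using m3[of p] fxp by (simp add: le_bool_def)
      have "\<not> (n - cnt n hi < p)" using qq c_lo c_hi bnd wn by linarith
      hence "\<not> apply_layer L (f hi) p" using G[of p hi] bnd by simp
      hence "\<not> f hi q" using gp hp by simp
      hence "\<not> f x' q" using m4[of q] by (simp add: le_bool_def)
      hence "\<not> apply_layer L (f x') q" using gq np by simp
      moreover have "apply_layer L (f x') q" using G[of q x'] bnd c_x' t1 by simp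
      ultimately show False by simp
    qed
    have c2: "\<not> f x' q"
    proof
      assume "f x' q"
      hence "apply_layer L (f x') p" using gp c1 by simp
      hence "n - w < p" using G[of p x'] bnd c_x' by simp
      thus False using t2 by simp
    qed
    show ?thesis using c1 c2 unfolding Good_def x'_def by simp
  qed
  have main: "Good x" if "card {k\<in>{1..n}. x k \<noteq> x0 k} = D" "\<forall>k. k \<notin> {1..n} \<longrightarrow> x k = x0 k"
      "cnt n x = cnt n x0" for D x
    using that
  proof (induction D arbitrary: x rule: less_induct)
    case (less D x)
    show ?case
    proof (cases "\<exists>k\<in>{1..n}. x k \<noteq> x0 k")
      case False
      hence "x = x0" using less.prems(2) by (intro ext) metis
      thus ?thesis using G0 unfolding Good_def f_def by simp
    next
      case True
      then obtain k where k: "k \<in> {1..n}" "x k \<noteq> x0 k" by blast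
      obtain j where j: "j \<in> {1..n}" "x j" "\<not> x0 j" using exists_diff[OF less.prems(3) k] by blast
      obtain jb where jb: "jb \<in> {1..n}" "x0 jb" "\<not> x jb"
        using exists_diff[OF less.prems(3)[symmetric], of k] k by blast
      have jj: "j \<noteq> jb" using j jb by auto
      define x1 where "x1 = x(j:=False, jb:=True)"
      have dd: "{k\<in>{1..n}. x1 k \<noteq> x0 k} = {k\<in>{1..n}. x k \<noteq> x0 k} - {j,jb}"
        unfolding x1_def using j jb by auto
      have fin: "finite {k\<in>{1..n}. x k \<noteq> x0 k}" by simp
      have sub: "{j,jb} \<subseteq> {k\<in>{1..n}. x k \<noteq> x0 k}" using j jb by auto
      have "card {k\<in>{1..n}. x1 k \<noteq> x0 k} = D - 2"
        unfolding dd using card_Diff_subset[OF _ sub] jj less.prems(1) by simp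
      moreover have "D \<ge> 2" using card_mono[OF fin sub] jj less.prems(1) by simp
      ultimately have lt: "card {k\<in>{1..n}. x1 k \<noteq> x0 k} < D" by simp
      have out: "\<forall>k. k \<notin> {1..n} \<longrightarrow> x1 k = x0 k" unfolding x1_def using less.prems(2) j jb by auto
      have c1: "cnt n x1 = cnt n x"
      proof -
        have a: "cnt n (x(j:=False)) + 1 = cnt n x" using cnt_upd_F[of j n x, OF j(1) j(2)] .
        have "\<not> (x(j:=False)) jb" using jb by simp
        hence "cnt n (x(j:=False, jb:=True)) = cnt n (x(j:=False)) + 1" using cnt_upd_T[of jb n "x(j:=False)", OF jb(1)] by blast
        thus ?thesis using a unfolding x1_def by simp
      qed
      have G1: "Good x1" using less.IH[OF lt refl out] c1 less.prems(3) by simp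
      have "Good (x1(jb:=False, j:=True))"
        by (rule propag[OF G1]) (use j jb jj in \<open>auto simp: x1_def\<close>)
      moreover have "x1(jb:=False, j:=True) = x" unfolding x1_def using j jb jj by (intro ext) auto
      ultimately show ?thesis by simp
    qed
  qed
  define w where "w = cnt n x0"
  define s where "s k = (if k \<in> {1..n} then n - w < k else x0 k)" for k
  have ss: "sorted_on n s" unfolding sorted_on_def s_def by (auto simp: le_bool_def)
  have "{k\<in>{1..n}. s k} = {n - w + 1..n}" unfolding s_def by auto
  hence cs: "cnt n s = w" unfolding cnt_def using cnt_le[of n x0] unfolding w_def by simp
  have "Good s" using main[OF refl, of s] cs unfolding w_def s_def by auto
  moreover have "f s = s" unfolding f_def using run_fixed[OF netQ ss] .
  ultimately show False using bnd unfolding Good_def s_def by auto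
qed

lemma comb:
  assumes La: "is_layer n La" and adj: "\<forall>(i,j)\<in>La. j = i+1"
    and s: "sorted_on n (apply_layer La y)"
    and ab: "1 \<le> a" "a < b" "b \<le> n" and ya: "y a" and yb: "\<not> y b"
  shows "b = a+1 \<and> (a,a+1) \<in> La"
proof -
  define z where "z = apply_layer La y"
  have zA: "z (a+1)" if "(a,a+1)\<in>La" using AL2[OF La that] ya unfolding z_def by simp
  have zA': "z a" if "(a,a+1)\<notin>La"
  proof (cases "used La a")
    case True
    then obtain j where "(a,j)\<in>La \<or> (j,a)\<in>La" unfolding used_cases by blast
    thus ?thesis
    proof
      assume "(a,j)\<in>La" hence "j = a+1" using adj by auto
      thus ?thesis using \<open>(a,j)\<in>La\<close> that by simp
    next
      assume "(j,a)\<in>La" thus ?thesis using AL2[OF La] ya unfolding z_def by simp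
    qed
  next
    case False thus ?thesis using AL3 ya unfolding z_def by simp
  qed
  have zB: "\<not> z (b-1)" if "(b-1,b)\<in>La" using AL1[OF La that] yb unfolding z_def by simp
  have zB': "\<not> z b" if "(b-1,b)\<notin>La"
  proof (cases "used La b")
    case True
    then obtain j where "(b,j)\<in>La \<or> (j,b)\<in>La" unfolding used_cases by blast
    thus ?thesis
    proof
      assume "(b,j)\<in>La" thus ?thesis using AL1[OF La] yb unfolding z_def by simp
    next
      assume h: "(j,b)\<in>La" hence "b = j+1" using adj by auto
      hence "j = b-1" by simp
      thus ?thesis using h that by simp
    qed
  next
    case False thus ?thesis using AL3 yb unfolding z_def by simp
  qed
  have sz: "z i \<le> z j" if "1 \<le> i" "i \<le> j" "j \<le> n" for i j
    using sortedD[OF s that] unfolding z_def .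
  show ?thesis
  proof (cases "(a,a+1)\<in>La")
    case A: True
    show ?thesis
    proof (cases "b = a+1")
      case True thus ?thesis using A by simp
    next
      case False
      hence "a+1 \<le> b-1" using ab by simp
      note nb = False
      hence "(b-1,b) \<notin> La \<or> \<not> z (b-1)" using zB by blast
      show ?thesis
      proof (cases "(b-1,b)\<in>La")
        case True
        have "z (a+1) \<le> z (b-1)" using \<open>a+1 \<le> b-1\<close> ab by (intro sz) auto
        thus ?thesis using zA[OF A] zB[OF True] by (simp add: le_bool_def)
      next
        case False
        have "z (a+1) \<le> z b" using ab nb by (intro sz) auto
        thus ?thesis using zA[OF A] zB'[OF False] by (simp add: le_bool_def)
      qed
    qed
  next
    case nA: False
    show ?thesis
    proof (cases "(b-1,b)\<in>La")
      case True
      have "b - 1 + 1 = b" using ab by simp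
      hence "b - 1 \<noteq> a" using True nA by metis
      hence "a \<le> b - 1" using ab by simp
      hence "z a \<le> z (b-1)" using ab by (intro sz) auto
      thus ?thesis using zA'[OF nA] zB[OF True] by (simp add: le_bool_def)
    next
      case False
      have "z a \<le> z b" using ab by (intro sz) auto
      thus ?thesis using zA'[OF nA] zB'[OF False] by (simp add: le_bool_def)
    qed
  qed
qed

lemma act_eq:
  assumes "is_layer n L1" "is_layer n L2"
    "{c\<in>L1. y (fst c) \<and> \<not> y (snd c)} = {c\<in>L2. y (fst c) \<and> \<not> y (snd c)}"
  shows "apply_layer L1 y = apply_layer L2 y"
  using active_eq[OF assms(1), of y] active_eq[OF assms(2), of y] assms(3) by simp

lemma Klem:
  assumes SN: "sorting_network n (Q @ [L])"
    and ab: "1 \<le> a" "a < b" "b \<le> n" and ya: "run Q x a" and yb: "\<not> run Q x b"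
  shows "b = a+1 \<and> (a,a+1) \<in> L"
proof -
  have layL: "is_layer n L" using SN unfolding sorting_network_def is_network_def by auto
  define y where "y = run Q x"
  define La where "La = {c\<in>L. snd c = fst c + 1}"
  have layLa: "is_layer n La" unfolding La_def by (rule layer_sub[OF layL]) auto
  have adj: "\<forall>(i,j)\<in>La. j = i+1" unfolding La_def by auto
  have "{c\<in>L. y (fst c) \<and> \<not> y (snd c)} = {c\<in>La. y (fst c) \<and> \<not> y (snd c)}"
  proof -
    { fix i j assume "(i,j)\<in>L" "y i" "\<not> y j"
      hence "j = i+1" using johnson[OF SN, of i j x] unfolding y_def by blast }
    thus ?thesis unfolding La_def by auto
  qed
  hence e: "apply_layer L y = apply_layer La y" by (rule act_eq[OF layL layLa])
  have "sorted_on n (apply_layer L y)" using SN unfolding sorting_network_def y_def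
    by (metis run_append run_single)
  hence "sorted_on n (apply_layer La y)" using e by simp
  hence "b = a+1 \<and> (a,a+1) \<in> La" using comb[OF layLa adj _ ab] ya yb unfolding y_def by blast
  thus ?thesis unfolding La_def by auto
qed

lemma used_disj:
  assumes P': "is_layer n P'" and sub: "P \<subseteq> P'" and u1: "used P k" and u2: "used (P' - P) k"
  shows False
proof -
  obtain a b where ab: "(a,b)\<in>P" "k = a \<or> k = b" using u1 unfolding used_def by auto
  obtain c d where cd: "(c,d)\<in>P' - P" "k = c \<or> k = d" using u2 unfolding used_def by auto
  have "(a,b) \<noteq> (c,d)" using ab cd by auto
  moreover have "(a,b)\<in>P'" "(c,d)\<in>P'" using ab cd sub by auto
  ultimately have "{a,b} \<inter> {c,d} = {}" using layer_disj[OF P'] by blast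
  thus False using ab cd by auto
qed

lemma compose:
  assumes P': "is_layer n P'" and sub: "P \<subseteq> P'"
  shows "apply_layer P' z = apply_layer (P' - P) (apply_layer P z)"
proof
  fix k
  have P: "is_layer n P" using layer_sub[OF P' sub] .
  have D: "is_layer n (P' - P)" using layer_sub[OF P'] by blast
  show "apply_layer P' z k = apply_layer (P' - P) (apply_layer P z) k"
  proof (cases "used P k")
    case True
    hence nu: "\<not> used (P' - P) k" using used_disj[OF P' sub] by blast
    obtain j where "(k,j)\<in>P \<or> (j,k)\<in>P" using True unfolding used_cases by blast
    thus ?thesis
    proof
      assume h: "(k,j)\<in>P"
      hence h': "(k,j)\<in>P'" using sub by auto
      show ?thesis using AL1[OF P h] AL1[OF P' h'] AL3[OF nu] by simp
    next
      assume h: "(j,k)\<in>P"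
      hence h': "(j,k)\<in>P'" using sub by auto
      show ?thesis using AL2[OF P h] AL2[OF P' h'] AL3[OF nu] by simp
    qed
  next
    case False
    show ?thesis
    proof (cases "used (P' - P) k")
      case True
      obtain j where "(k,j)\<in>P' - P \<or> (j,k)\<in>P' - P" using True unfolding used_cases by blast
      thus ?thesis
      proof
        assume h: "(k,j)\<in>P' - P"
        have "used (P' - P) j" using h unfolding used_def by auto
        hence nj: "\<not> used P j" using used_disj[OF P' sub] by blast
        show ?thesis using AL1[OF D h] AL1[OF P', of k j] h AL3[OF False] AL3[OF nj] by simp
      next
        assume h: "(j,k)\<in>P' - P"
        have "used (P' - P) j" using h unfolding used_def by auto
        hence nj: "\<not> used P j" using used_disj[OF P' sub] by blast
        show ?thesis using AL2[OF D h] AL2[OF P', of j k] h AL3[OF False] AL3[OF nj] by simp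
      qed
    next
      case F2: False
      have "\<not> used P' k" using False F2 unfolding used_def by auto
      thus ?thesis using AL3 False F2 by metis
    qed
  qed
qed

lemma absorb:
  assumes L': "is_layer n L'" and sub: "A \<subseteq> L'"
  shows "apply_layer L' (apply_layer A y) = apply_layer L' y"
proof
  fix k
  have A: "is_layer n A" using layer_sub[OF L' sub] .
  have nuA: "\<not> used A m" if "(a,b)\<in>L'" "(a,b)\<notin>A" "m = a \<or> m = b" for a b m
  proof
    assume "used A m"
    then obtain c d where cd: "(c,d)\<in>A" "m = c \<or> m = d" unfolding used_def by auto
    have "(c,d)\<in>L'" using cd sub by auto
    hence "(a,b) = (c,d) \<or> {a,b} \<inter> {c,d} = {}" using layer_disj[OF L' that(1)] by blast
    thus False using cd that by auto
  qed
  show "apply_layer L' (apply_layer A y) k = apply_layer L' y k"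
  proof (cases "used L' k")
    case True
    obtain j where "(k,j)\<in>L' \<or> (j,k)\<in>L'" using True unfolding used_cases by blast
    thus ?thesis
    proof
      assume h: "(k,j)\<in>L'"
      show ?thesis
      proof (cases "(k,j)\<in>A")
        case True
        show ?thesis using AL1[OF L' h] AL1[OF A True] AL2[OF A True] by auto
      next
        case False
        show ?thesis using AL1[OF L' h] AL3[OF nuA[OF h False]] by simp
      qed
    next
      assume h: "(j,k)\<in>L'"
      show ?thesis
      proof (cases "(j,k)\<in>A")
        case True
        show ?thesis using AL2[OF L' h] AL1[OF A True] AL2[OF A True] by auto
      next
        case False
        show ?thesis using AL2[OF L' h] AL3[OF nuA[OF h False]] by simp
      qed
    qed
  next
    case False
    hence "\<not> used A k" using sub unfolding used_def by auto
    thus ?thesis using AL3 False by metis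
  qed
qed

lemma insert_layer:
  assumes L: "is_layer n L0" and ab: "1 \<le> a" "a < b" "b \<le> n"
    and ua: "\<not> used L0 a" and ub: "\<not> used L0 b"
  shows "is_layer n (insert (a,b) L0)"
proof -
  have D: "{fst c, snd c} \<inter> {a,b} = {}" if "c \<in> L0" for c
  proof -
    obtain i j where c: "c = (i,j)" by (cases c)
    have "i \<noteq> a" "i \<noteq> b" "j \<noteq> a" "j \<noteq> b" using that ua ub unfolding used_def c by blast+
    thus ?thesis unfolding c by simp
  qed
  have B: "\<forall>(i,j)\<in>insert (a,b) L0. 1 \<le> i \<and> i < j \<and> j \<le> n" using layer_bounds[OF L] ab by auto
  have "{fst c1, snd c1} \<inter> {fst c2, snd c2} = {}"
    if "c1 \<in> insert (a,b) L0" "c2 \<in> insert (a,b) L0" "c1 \<noteq> c2" for c1 c2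
  proof (cases "c1 = (a,b)")
    case True
    hence "c2 \<in> L0" using that by auto
    thus ?thesis using D[of c2] True by (simp add: Int_commute)
  next
    case False
    hence c1: "c1 \<in> L0" using that by auto
    show ?thesis
    proof (cases "c2 = (a,b)")
      case True thus ?thesis using D[OF c1] by simp
    next
      case False
      hence "c2 \<in> L0" using that by auto
      thus ?thesis using c1 that(3) L unfolding is_layer_def by blast
    qed
  qed
  thus ?thesis using B unfolding is_layer_def by blast
qed

lemma unused_insert:
  "{k\<in>{1..n}. \<not> used (insert (a,b) L0) k} = {k\<in>{1..n}. \<not> used L0 k} - {a,b}"
  unfolding used_def by auto

lemma llnf_exists:
  "is_layer n L0 \<Longrightarrow> \<forall>(i,j)\<in>L0. j = i+1 \<Longrightarrow> \<exists>L'. L0 \<subseteq> L' \<and> is_layer n L' \<and> llnf n L'"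
proof (induction "card {k\<in>{1..n}. \<not> used L0 k}" arbitrary: L0 rule: less_induct)
  case (less L0)
  show ?case
  proof (cases "\<exists>i. 1 \<le> i \<and> i < n \<and> \<not> used L0 i \<and> \<not> used L0 (i+1)")
    case False
    thus ?thesis using less.prems unfolding llnf_def by blast
  next
    case True
    then obtain i where i: "1 \<le> i" "i < n" "\<not> used L0 i" "\<not> used L0 (i+1)" by blast
    define L1 where "L1 = insert (i,i+1) L0"
    have l1: "is_layer n L1" unfolding L1_def using insert_layer[OF less.prems(1)] i by simp
    have a1: "\<forall>(a,b)\<in>L1. b = a+1" using less.prems(2) unfolding L1_def by auto
    have iin: "i \<in> {k\<in>{1..n}. \<not> used L0 k}" using i by simp
    have "{k\<in>{1..n}. \<not> used L0 k} - {i,i+1} \<subset> {k\<in>{1..n}. \<not> used L0 k}"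
      using iin by blast
    hence "{k\<in>{1..n}. \<not> used L1 k} \<subset> {k\<in>{1..n}. \<not> used L0 k}"
      unfolding L1_def unused_insert .
    hence "card {k\<in>{1..n}. \<not> used L1 k} < card {k\<in>{1..n}. \<not> used L0 k}"
      by (rule psubset_card_mono[rotated]) simp
    from less.hyps[OF this l1 a1] obtain L' where "L1 \<subseteq> L'" "is_layer n L'" "llnf n L'" by blast
    thus ?thesis unfolding L1_def by blast
  qed
qed

lemma match_exists:
  "is_layer n P0 \<Longrightarrow> \<exists>P'. P0 \<subseteq> P' \<and> is_layer n P' \<and> card {k\<in>{1..n}. \<not> used P' k} \<le> 1"
proof (induction "card {k\<in>{1..n}. \<not> used P0 k}" arbitrary: P0 rule: less_induct)
  case (less P0)
  show ?case
  proof (cases "card {k\<in>{1..n}. \<not> used P0 k} \<le> 1")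
    case True thus ?thesis using less.prems by blast
  next
    case False
    have fin: "finite {k\<in>{1..n}. \<not> used P0 k}" by simp
    obtain u v where uv: "u \<in> {k\<in>{1..n}. \<not> used P0 k}" "v \<in> {k\<in>{1..n}. \<not> used P0 k}" "u \<noteq> v"
      using False card_le_Suc0_iff_eq[OF fin] by auto
    define a where "a = min u v"
    define b where "b = max u v"
    have ab: "1 \<le> a" "a < b" "b \<le> n" "\<not> used P0 a" "\<not> used P0 b" "a \<in> {k\<in>{1..n}. \<not> used P0 k}"
      using uv unfolding a_def b_def by (auto simp: min_def max_def)
    define P1 where "P1 = insert (a,b) P0"
    have l1: "is_layer n P1" unfolding P1_def using insert_layer[OF less.prems(1)] ab by simp
    have "{k\<in>{1..n}. \<not> used P0 k} - {a,b} \<subset> {k\<in>{1..n}. \<not> used P0 k}"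
      using ab by blast
    hence "{k\<in>{1..n}. \<not> used P1 k} \<subset> {k\<in>{1..n}. \<not> used P0 k}"
      unfolding P1_def unused_insert .
    hence "card {k\<in>{1..n}. \<not> used P1 k} < card {k\<in>{1..n}. \<not> used P0 k}"
      by (rule psubset_card_mono[rotated]) simp
    from less.hyps[OF this l1] obtain P' where "P1 \<subseteq> P'" "is_layer n P'" "card {k\<in>{1..n}. \<not> used P' k} \<le> 1" by blast
    thus ?thesis unfolding P1_def by blast
  qed
qed

lemma blocks_sub:
  assumes L: "is_layer n L" and B: "B \<in> blocks n L"
  shows "B \<subseteq> {1..n}" "finite B" "B \<noteq> {}"
proof -
  obtain k where k: "k \<in> {1..n}" "B = block_of L k" using B unfolding blocks_def by auto
  show s: "B \<subseteq> {1..n}" unfolding k(2) block_of_def using k(1) layer_bounds[OF L] by fastforce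
  show "finite B" using finite_subset[OF s] by simp
  show "B \<noteq> {}" unfolding k(2) block_of_def by simp
qed

lemma card1_eq: "card {k\<in>{1..n}. \<not> used P k} \<le> 1 \<Longrightarrow> u \<in> {1..n} \<Longrightarrow> v \<in> {1..n} \<Longrightarrow>
   \<not> used P u \<Longrightarrow> \<not> used P v \<Longrightarrow> u = v"
proof -
  assume a: "card {k\<in>{1..n}. \<not> used P k} \<le> 1" "u \<in> {1..n}" "v \<in> {1..n}" "\<not> used P u" "\<not> used P v"
  have fin: "finite {k\<in>{1..n}. \<not> used P k}" by simp
  show "u = v" using a card_le_Suc0_iff_eq[OF fin] by auto
qed

lemma cond2_card:
  assumes L': "is_layer n L'" and c1: "card {k\<in>{1..n}. \<not> used P k} \<le> 1"
    and B: "B \<in> blocks n L'" and B': "B' \<in> blocks n L'" and m: "Max B + 1 = Min B'"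
    and c: "c \<in> B" "\<not> used P c" and c': "c' \<in> B'" "\<not> used P c'"
  shows False
proof -
  have "c \<in> {1..n}" "c' \<in> {1..n}" using blocks_sub[OF L' B] blocks_sub[OF L' B'] c c' by auto
  hence "c = c'" using card1_eq[OF c1] c c' by blast
  moreover have "c \<le> Max B" using blocks_sub(2)[OF L' B] c by simp
  moreover have "Min B' \<le> c'" using blocks_sub(2)[OF L' B'] c' by simp
  ultimately show False using m by simp
qed

lemma sorting_empty_small: "sorting_network n [] \<Longrightarrow> n \<le> 1"
proof (rule ccontr)
  assume s: "sorting_network n []" and "\<not> n \<le> 1"
  define x where "x k = (k = (1::nat))" for k
  have "sorted_on n x" using s unfolding sorting_network_def by (simp add: run_Nil)
  hence "x 1 \<le> x 2" using \<open>\<not> n \<le> 1\<close> by (intro sortedD) auto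
  thus False unfolding x_def by simp
qed

lemma small_blocks1:
  assumes "n \<le> 1" "is_layer n L" "B \<in> blocks n L"
  shows "B = {1}"
  using blocks_sub[OF assms(2,3)] assms(1) by (cases n) auto

lemma small_blocks2:
  assumes L: "is_layer 2 L" "(1,2) \<in> L" and B: "B \<in> blocks 2 L"
  shows "B = {1,2}"
proof -
  obtain k where k: "k \<in> {1..2}" "B = block_of L k" using B unfolding blocks_def by auto
  have s: "B \<subseteq> {1..2}" using blocks_sub[OF L(1) B] by simp
  have "k = 1 \<or> k = 2" using k by auto
  hence "1 \<in> B" "2 \<in> B" using k L(2) unfolding block_of_def by auto
  thus ?thesis using s by auto
qed

lemma cosat_intro:
  assumes "sorting_network n N" "llnf n (last_layer N)"
    "\<And>B B' c c'. B \<in> blocks n (last_layer N) \<Longrightarrow> B' \<in> blocks n (last_layer N) \<Longrightarrow> Max B + 1 = Min B'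
       \<Longrightarrow> c \<in> B \<Longrightarrow> \<not> used (prev_layer N) c \<Longrightarrow> c' \<in> B' \<Longrightarrow> \<not> used (prev_layer N) c' \<Longrightarrow> False"
    "\<And>i. (i,i+1) \<in> last_layer N \<Longrightarrow> \<not> used (prev_layer N) i \<Longrightarrow> \<not> used (prev_layer N) (i+1) \<Longrightarrow>
       (2 \<le> i \<longrightarrow> used (last_layer N) (i - 1)) \<and> (i + 2 \<le> n \<longrightarrow> used (last_layer N) (i + 2))"
  shows "co_saturated n N"
  unfolding co_saturated_def using assms by blast

theorem theorem4:
  fixes n :: nat and C :: network
  assumes "sorting_network n C"
  shows "\<exists>N. length N = length C \<and> co_saturated n N"
proof -
  note SN = assms
  have netC: "is_network n C" using SN unfolding sorting_network_def by simp
  have shape: "C = [] \<or> (\<exists>L. C = [L]) \<or> (\<exists>Q0 P L. C = Q0 @ [P,L])"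
  proof (cases C rule: rev_cases)
    case Nil thus ?thesis by simp
  next
    case (snoc ys L)
    show ?thesis
    proof (cases ys rule: rev_cases)
      case Nil thus ?thesis using snoc by simp
    next
      case (snoc zs P) thus ?thesis using \<open>C = ys @ [L]\<close> by simp
    qed
  qed
  show ?thesis
  proof (cases "C = []")
    case True
    hence n1: "n \<le> 1" using SN sorting_empty_small by simp
    have "co_saturated n C"
    proof (rule cosat_intro)
      show "sorting_network n C" by (rule SN)
      show "llnf n (last_layer C)" using True n1 unfolding llnf_def last_layer_def by auto
    next
      fix B B' c c' assume B: "B \<in> blocks n (last_layer C)" and B': "B' \<in> blocks n (last_layer C)"
        and m: "Max B + 1 = Min B'"
      have l: "is_layer n (last_layer C)" using True unfolding last_layer_def is_layer_def by simp
      show False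
        using small_blocks1[OF n1 l B] small_blocks1[OF n1 l B'] m by simp
    next
      fix i assume "(i, i + 1) \<in> last_layer C"
      hence False using True unfolding last_layer_def by simp
      thus "(2 \<le> i \<longrightarrow> used (last_layer C) (i - 1)) \<and> (i + 2 \<le> n \<longrightarrow> used (last_layer C) (i + 2))" by auto
    qed
    thus ?thesis by blast
  next
    case nonempty: False
    define Q where "Q = butlast C"
    define L where "L = last C"
    have CQ: "C = Q @ [L]" unfolding Q_def L_def using nonempty by simp
    have SN': "sorting_network n (Q @ [L])" using SN CQ by simp
    have layL: "is_layer n L" using netC CQ unfolding is_network_def by simp
    define La where "La = {c\<in>L. snd c = fst c + 1}"
    have layLa: "is_layer n La" unfolding La_def by (rule layer_sub[OF layL]) auto
    have adj: "\<forall>(i,j)\<in>La. j = i+1" unfolding La_def by auto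
    obtain L' where L': "La \<subseteq> L'" "is_layer n L'" "llnf n L'" using llnf_exists[OF layLa adj] by blast
    have adjL': "\<forall>(i,j)\<in>L'. j = i+1" using L'(3) unfolding llnf_def by blast
    have KK: "b = a+1 \<and> (a,a+1) \<in> L" if "1 \<le> a" "a < b" "b \<le> n" "run Q x a" "\<not> run Q x b" for a b x
      using Klem[OF SN' that] .
    have actLL': "apply_layer L' (run Q x) = apply_layer L (run Q x)" for x
    proof (rule act_eq[OF L'(2) layL])
      let ?y = "run Q x"
      show "{c\<in>L'. ?y (fst c) \<and> \<not> ?y (snd c)} = {c\<in>L. ?y (fst c) \<and> \<not> ?y (snd c)}"
      proof (intro set_eqI iffI)
        fix c assume "c \<in> {c\<in>L'. ?y (fst c) \<and> \<not> ?y (snd c)}"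
        then obtain i j where c: "c = (i,j)" "(i,j)\<in>L'" "?y i" "\<not> ?y j" by (cases c) auto
        have "1 \<le> i" "i < j" "j \<le> n" using layer_bounds[OF L'(2) c(2)] by auto
        hence "j = i+1 \<and> (i,i+1)\<in>L" using KK c(3,4) by blast
        thus "c \<in> {c\<in>L. ?y (fst c) \<and> \<not> ?y (snd c)}" using c by auto
      next
        fix c assume "c \<in> {c\<in>L. ?y (fst c) \<and> \<not> ?y (snd c)}"
        then obtain i j where c: "c = (i,j)" "(i,j)\<in>L" "?y i" "\<not> ?y j" by (cases c) auto
        have "1 \<le> i" "i < j" "j \<le> n" using layer_bounds[OF layL c(2)] by auto
        hence "j = i+1" using KK c(3,4) by blast
        hence "(i,j)\<in>La" unfolding La_def using c by simp
        thus "c \<in> {c\<in>L'. ?y (fst c) \<and> \<not> ?y (snd c)}" using c L'(1) by auto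
      qed
    qed
    have sortL: "sorted_on n (apply_layer L (run Q x))" for x
      using SN' unfolding sorting_network_def by (metis run_append run_single)
    show ?thesis
    proof (cases "Q = []")
      case Qnil: True
      have C1: "C = [L]" using CQ Qnil by simp
      have n2: "n \<le> 2"
      proof (rule ccontr)
        assume "\<not> n \<le> 2"
        define x where "x k = (k = (1::nat))" for k
        have "(3::nat) = 1 + 1 \<and> (1,1+1) \<in> L" using KK[of 1 3 x] \<open>\<not> n \<le> 2\<close> Qnil unfolding x_def by (simp add: run_Nil)
        thus False by simp
      qed
      define N where "N = [L']"
      have sN: "sorting_network n N"
        unfolding sorting_network_def N_def is_network_def
        using L'(2) actLL'[of x for x] sortL Qnil by (simp add: run_single run_Nil)
      have "co_saturated n N"
      proof (rule cosat_intro)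
        show "sorting_network n N" by (rule sN)
        show "llnf n (last_layer N)" using L'(3) unfolding N_def last_layer_def by simp
      next
        fix B B' c c' assume B: "B \<in> blocks n (last_layer N)" and B': "B' \<in> blocks n (last_layer N)"
          and m: "Max B + 1 = Min B'"
        have ll: "last_layer N = L'" unfolding N_def last_layer_def by simp
        show False
        proof (cases "n \<le> 1")
          case True
          have "B = {1}" "B' = {1}" using small_blocks1[OF True L'(2)] B B' ll by auto
          thus False using m by simp
        next
          case False
          hence n2': "n = 2" using n2 by simp
          have "\<not> (1 \<le> (1::nat) \<and> 1 < n \<and> \<not> used L' 1 \<and> \<not> used L' (1+1))"
            using L'(3) unfolding llnf_def by blast
          hence "used L' 1 \<or> used L' (1+1)" using n2' by simp
          hence "used L' 1 \<or> used L' 2" by (simp add: numeral_2_eq_2)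
          then obtain a b where ab: "(a,b)\<in>L'" "1 = a \<or> 1 = b \<or> 2 = a \<or> 2 = b" unfolding used_def by blast
          have "1 \<le> a" "a < b" "b \<le> 2" using layer_bounds[OF L'(2) ab(1)] n2' by auto
          hence "a = 1" "b = 2" by auto
          hence "(1,2)\<in>L'" using ab by simp
          moreover have "is_layer 2 L'" using L'(2) n2' by simp
          ultimately have "B = {1,2}" "B' = {1,2}" using small_blocks2[of L' B] small_blocks2[of L' B'] B B' ll n2' by simp_all
          thus False using m by simp
        qed
      next
        fix i assume h: "(i, i + 1) \<in> last_layer N"
        have "i + 1 \<le> n" "1 \<le> i" using layer_bounds[OF L'(2)] h unfolding N_def last_layer_def by auto
        hence "i = 1" "n = 2" using n2 by auto
        thus "(2 \<le> i \<longrightarrow> used (last_layer N) (i - 1)) \<and> (i + 2 \<le> n \<longrightarrow> used (last_layer N) (i + 2))" by auto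
      qed
      moreover have "length N = length C" unfolding N_def C1 by simp
      ultimately show ?thesis by blast
    next
      case Qne: False
      define Q0 where "Q0 = butlast Q"
      define P where "P = last Q"
      have QP: "Q = Q0 @ [P]" unfolding Q0_def P_def using Qne by simp
      have layP: "is_layer n P" using netC CQ QP unfolding is_network_def by simp
      have netQ0: "is_network n Q0" using netC CQ QP unfolding is_network_def by simp
      obtain P' where P': "P \<subseteq> P'" "is_layer n P'" "card {k\<in>{1..n}. \<not> used P' k} \<le> 1"
        using match_exists[OF layP] by blast
      define N where "N = Q0 @ [P', L']"
      have run_eq: "run N x = apply_layer L (run Q x)" for x
      proof -
        define z where "z = run Q0 x"
        define y where "y = apply_layer P z"
        have yQ: "y = run Q x" unfolding y_def z_def QP run_append run_single ..
        define A where "A = {c\<in>P' - P. y (fst c) \<and> \<not> y (snd c)}"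
        have layD: "is_layer n (P' - P)" by (rule layer_sub[OF P'(2)]) auto
        have AL': "A \<subseteq> L'"
        proof
          fix c assume "c \<in> A"
          then obtain i j where c: "c = (i,j)" "(i,j)\<in>P'" "y i" "\<not> y j" unfolding A_def by (cases c) auto
          have "1 \<le> i" "i < j" "j \<le> n" using layer_bounds[OF P'(2) c(2)] by auto
          hence "j = i+1 \<and> (i,i+1)\<in>L" using KK c(3,4) unfolding yQ by blast
          hence "(i,j)\<in>La" unfolding La_def by simp
          thus "c \<in> L'" using c L'(1) by auto
        qed
        have "run N x = apply_layer L' (apply_layer P' z)"
          unfolding N_def z_def run_append run_Cons run_Nil ..
        also have "\<dots> = apply_layer L' (apply_layer (P' - P) y)"
          unfolding y_def using compose[OF P'(2) P'(1)] by simp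
        also have "\<dots> = apply_layer L' (apply_layer A y)"
          unfolding A_def using active_eq[OF layD] by simp
        also have "\<dots> = apply_layer L' y" using absorb[OF L'(2) AL'] .
        also have "\<dots> = apply_layer L y" unfolding yQ using actLL' .
        finally show ?thesis unfolding yQ .
      qed
      have sN: "sorting_network n N"
        unfolding sorting_network_def
      proof
        show "is_network n N" using netQ0 P'(2) L'(2) unfolding N_def is_network_def by auto
        show "\<forall>x. sorted_on n (run N x)" using run_eq sortL by simp
      qed
      have pl: "prev_layer N = P'" unfolding N_def prev_layer_def by (simp add: nth_append)
      have ll: "last_layer N = L'" unfolding N_def last_layer_def by simp
      have "co_saturated n N"
      proof (rule cosat_intro, unfold pl ll)
        show "sorting_network n N" by (rule sN)
        show "llnf n L'" by (rule L'(3))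
      next
        fix B B' c c' assume B: "B \<in> blocks n L'" and B': "B' \<in> blocks n L'" and m: "Max B + 1 = Min B'"
          and "c \<in> B" "\<not> used P' c" "c' \<in> B'" "\<not> used P' c'"
        thus False using cond2_card[OF L'(2) P'(3) B B' m] by blast
      next
        fix i assume h: "(i, i + 1) \<in> L'" "\<not> used P' i" "\<not> used P' (i + 1)"
        have "i + 1 \<le> n" "1 \<le> i" using layer_bounds[OF L'(2)] h by auto
        hence "i = i + 1" using card1_eq[OF P'(3), of i "i+1"] h by auto
        thus "(2 \<le> i \<longrightarrow> used L' (i - 1)) \<and> (i + 2 \<le> n \<longrightarrow> used L' (i + 2))" by auto
      qed
      moreover have "length N = length C" unfolding N_def CQ QP by simp
      ultimately show ?thesis by blast
    qed
  qed
qed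

end
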